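(* Let $T_n \doteq (n+1)^{-3/4}$, $A_n \doteq (n+1)^{1/4}$ and $p_n \doteq T_n/A_n = \frac{1}{n+1}$ for $n\ge 0$. Let $\{X_{n+1}\}_{n\ge0}$ be independent random variables with $X_{n+1}=A_n$ with probability $p_n$ and $X_{n+1}=0$ with probability $1-p_n$. Let $\mathcal{F}_n=\sigma(X_1,\dots,X_n)$, $z_0=0$ and $z_{n+1}=(1-T_n)z_n+X_{n+1}$ for $n\ge0$. Then $\{T_n\}$ satisfies $\sum_n T_n=\infty$, $\sum_n T_n^2<\infty$, and: (1) $\mathbb{E}[z_{n+1}\mid\mathcal{F}_n]=(1-T_n)z_n+T_n$ for all $n\ge 0$, i.e. $\{z_n\}$ satisfies $\mathbb{E}[z_{n+1}\mid \mathcal F_n]\le(1-\alpha T_n)z_n+\xi T_n$ with $\alpha=\xi=1$; (2) $\limsup_{n\to\infty} z_n=\infty$ almost surely. *)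

theory Defs
  imports "HOL-Probability.Probability"
begin

definition stepT :: "nat \<Rightarrow> real" where
  "stepT n = (real n + 1) powr (-3/4)"

definition ampA :: "nat \<Rightarrow> real" where
  "ampA n = (real n + 1) powr (1/4)"

definition probp :: "nat \<Rightarrow> real" where
  "probp n = stepT n / ampA n"

definition nat_filtration :: "'a measure \<Rightarrow> (nat \<Rightarrow> 'a \<Rightarrow> real) \<Rightarrow> nat \<Rightarrow> 'a measure" where
  "nat_filtration M X n =
     sigma (space M) {X i -` B \<inter> space M | i B. i \<in> {1..n} \<and> B \<in> sets borel}"

end

theory Submission
  imports Defs
begin

lemma ampA_pos: "0 < ampA n" by (simp add: ampA_def)
lemma stepT_pos: "0 < stepT n" by (simp add: stepT_def)
lemma stepT_le1: "stepT n \<le> 1"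
  using ge_one_powr_ge_zero[of "real n+1" "3/4"] unfolding stepT_def by (simp add: powr_minus field_simps)
lemma ampA_ge1: "1 \<le> ampA n"
  unfolding ampA_def by (rule ge_one_powr_ge_zero) auto
lemma ampA_mono: "m \<le> n \<Longrightarrow> ampA m \<le> ampA n"
  unfolding ampA_def by (rule powr_mono2) auto
lemma probp_eq: "probp n = 1 / (real n + 1)"
proof -
  have "probp n = (real n + 1) powr (-3/4 - 1/4)"
    unfolding probp_def stepT_def ampA_def by (rule powr_diff[symmetric])
  also have "\<dots> = 1 / (real n + 1)" by (simp add: powr_minus_divide)
  finally show ?thesis .
qed
lemma stepT_eq: "stepT n = probp n * ampA n"
  using ampA_pos[of n] unfolding probp_def by simp

lemma not_summable_stepT: "\<not> summable stepT"
proof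
  assume "summable stepT"
  hence "summable (\<lambda>n. real (Suc n) powr (-3/4))" unfolding stepT_def by (simp add: add.commute)
  hence "summable (\<lambda>n. real n powr (-3/4))" by (subst (asm) summable_Suc_iff)
  thus False by (simp add: summable_real_powr_iff)
qed

lemma summable_stepT2: "summable (\<lambda>n. (stepT n)\<^sup>2)"
proof -
  have "summable (\<lambda>n. real n powr (-3/2))" by (simp add: summable_real_powr_iff)
  hence "summable (\<lambda>n. real (Suc n) powr (-3/2))" by (subst summable_Suc_iff)
  moreover have "(stepT n)\<^sup>2 = real (Suc n) powr (-3/2)" for n
    unfolding stepT_def by (simp add: powr_powr[symmetric] add.commute powr_power)
  ultimately show ?thesis by simp
qed

lemma telescope: assumes "n \<ge> 1" "n \<le> m" shows "(\<Prod>k\<in>{n..m}. 1 - 1/(real k + 1)) = real n / (real m + 1)"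
  using assms(2) proof (induction m rule: dec_induct)
  case base thus ?case by (simp add: field_simps)
next
  case (step m)
  have "{n..Suc m} = insert (Suc m) {n..m}" using step by auto
  hence "(\<Prod>k\<in>{n..Suc m}. 1 - 1/(real k + 1)) = (1 - 1/(real (Suc m) + 1)) * (real n / (real m + 1))"
    using step by simp
  also have "\<dots> = real n / (real (Suc m) + 1)"
  proof -
    have "1 - 1/(real (Suc m) + 1) = (real m + 1) / (real m + 2)" by (simp add: field_simps)
    thus ?thesis by simp
  qed
  finally show ?case .
qed

lemma root4_bound: assumes "0 < (c::real)" "c ^ 4 < x" shows "c < x powr (1/4)"
proof -
  have c4: "c ^ 4 = c powr 4" using assms(1) by (simp add: powr_realpow)
  have "0 \<le> c ^ 4" using assms(1) by simp
  hence "(c ^ 4) powr (1/4) < x powr (1/4)" using assms(2) by (intro powr_less_mono2) auto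
  moreover have "(c ^ 4) powr (1/4) = c" unfolding c4 powr_powr using assms(1) by simp
  ultimately show ?thesis by simp
qed

lemma Int_stable_sigma_sets: "G \<subseteq> Pow \<Omega> \<Longrightarrow> Int_stable (sigma_sets \<Omega> G)"
  using sigma_algebra_sigma_sets[of G \<Omega>] unfolding sigma_algebra_def by (auto intro: algebra.Int_stable)

theorem mainTheorem1:
  fixes M :: "'a measure" and X z :: "nat \<Rightarrow> 'a \<Rightarrow> real"
  assumes "prob_space M"
    and "prob_space.indep_vars M (\<lambda>_. borel) X {1..}"
    and "\<And>n. prob_space.prob M {\<omega> \<in> space M. X (Suc n) \<omega> = ampA n} = probp n"
    and "\<And>n. prob_space.prob M {\<omega> \<in> space M. X (Suc n) \<omega> = 0} = 1 - probp n"
    and "\<And>\<omega>. z 0 \<omega> = 0"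
    and "\<And>n \<omega>. z (Suc n) \<omega> = (1 - stepT n) * z n \<omega> + X (Suc n) \<omega>"
  shows "\<not> summable stepT
    \<and> summable (\<lambda>n. (stepT n)\<^sup>2)
    \<and> (\<forall>n. AE \<omega> in M. real_cond_exp M (nat_filtration M X n) (z (Suc n)) \<omega>
                          = (1 - stepT n) * z n \<omega> + stepT n)
    \<and> (AE \<omega> in M. limsup (\<lambda>n. ereal (z n \<omega>)) = \<infinity>)"
proof -
  interpret P: prob_space M by fact
  have indep: "P.indep_vars (\<lambda>_. borel) X {1..}" by fact
  have Xm: "X i \<in> borel_measurable M" if "i \<ge> 1" for i
    using indep that unfolding P.indep_vars_def by auto
  have XSm[measurable]: "X (Suc n) \<in> borel_measurable M" for n using Xm by simp
  define E where "E n = {\<omega> \<in> space M. X (Suc n) \<omega> = ampA n}" for n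
  have E_sets[measurable]: "E n \<in> sets M" for n unfolding E_def by measurable
  have probE: "P.prob (E n) = probp n" for n unfolding E_def by (rule assms(3))
  have two: "AE \<omega> in M. X (Suc n) \<omega> = ampA n \<or> X (Suc n) \<omega> = 0" for n
  proof -
    let ?Z = "{\<omega> \<in> space M. X (Suc n) \<omega> = 0}"
    have "?Z \<in> sets M" by measurable
    moreover have "E n \<inter> ?Z = {}" using ampA_pos[of n] unfolding E_def by auto
    ultimately have "P.prob (E n \<union> ?Z) = 1"
      using P.finite_measure_Union[OF E_sets[of n], of ?Z] probE[of n] assms(4)[of n] by simp
    hence "AE \<omega> in M. \<omega> \<in> E n \<union> ?Z" by (rule P.AE_prob_1)
    thus ?thesis unfolding E_def by eventually_elim auto
  qed
  have twoall: "AE \<omega> in M. \<forall>n. X (Suc n) \<omega> = ampA n \<or> X (Suc n) \<omega> = 0"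
    using two by (simp add: AE_all_countable)
  have step_nonneg: "0 \<le> 1 - stepT n" for n using stepT_le1[of n] by simp

  have io: "AE \<omega> in M. \<exists>k\<ge>n. X (Suc k) \<omega> = ampA k" if n1: "n \<ge> 1" for n
  proof -
    define B where "B = {\<omega> \<in> space M. \<forall>k\<ge>n. X (Suc k) \<omega> \<noteq> ampA k}"
    have B_sets: "B \<in> sets M" unfolding B_def by measurable
    have bound: "P.prob B \<le> real n / (real m + 1)" if nm: "n \<le> m" for m
    proof -
      define C where "C = (\<Inter>j\<in>Suc ` {n..m}. X j -` (- {ampA (j - 1)}) \<inter> space M)"
      have "B \<subseteq> C"
      proof
        fix \<omega> assume "\<omega> \<in> B"
        hence "\<omega> \<in> space M" "\<And>k. k \<ge> n \<Longrightarrow> X (Suc k) \<omega> \<noteq> ampA k" unfolding B_def by auto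
        note h = this
        show "\<omega> \<in> C" unfolding C_def
        proof (rule INT_I)
          fix j assume "j \<in> Suc ` {n..m}"
          then obtain k where "j = Suc k" "k \<ge> n" by (cases j) auto
          thus "\<omega> \<in> X j -` (- {ampA (j - 1)}) \<inter> space M" using h by simp
        qed
      qed
      have "P.prob C = (\<Prod>j\<in>Suc ` {n..m}. P.prob (X j -` (- {ampA (j - 1)}) \<inter> space M))"
        unfolding C_def by (rule P.indep_varsD[OF indep]) (use nm in auto)
      also have "\<dots> = (\<Prod>k\<in>{n..m}. P.prob (X (Suc k) -` (- {ampA k}) \<inter> space M))"
        by (subst prod.reindex) auto
      also have "\<dots> = (\<Prod>k\<in>{n..m}. 1 - 1 / (real k + 1))"
      proof (rule prod.cong[OF refl])
        fix k
        have "X (Suc k) -` (- {ampA k}) \<inter> space M = space M - E k" unfolding E_def by auto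
        thus "P.prob (X (Suc k) -` (- {ampA k}) \<inter> space M) = 1 - 1 / (real k + 1)"
          using P.prob_compl[OF E_sets[of k]] probE[of k] probp_eq[of k] by simp
      qed
      also have "\<dots> = real n / (real m + 1)" by (rule telescope[OF n1 nm])
      finally have "P.prob C = real n / (real m + 1)" .
      moreover have "C \<in> sets M" unfolding C_def using nm
        by (intro sets.finite_INT) (auto intro!: measurable_sets Xm)
      ultimately show ?thesis using P.finite_measure_mono[OF \<open>B \<subseteq> C\<close>] by simp
    qed
    have "P.prob B = 0"
    proof (rule ccontr)
      assume "P.prob B \<noteq> 0"
      hence pos: "P.prob B > 0" using measure_nonneg[of M B] by linarith
      obtain m where m: "real n / P.prob B < real m" using reals_Archimedean2 by blast
      define m' where "m' = max m n"
      have "real n < real m * P.prob B" using m pos by (simp add: field_simps)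
      also have "\<dots> \<le> (real m' + 1) * P.prob B" using pos unfolding m'_def
        by (intro mult_right_mono) auto
      finally have "real n / (real m' + 1) < P.prob B" by (simp add: field_simps)
      with bound[of m'] show False unfolding m'_def by simp
    qed
    hence "P.prob (space M - B) = 1" using P.prob_compl[OF B_sets] by simp
    hence "AE \<omega> in M. \<omega> \<in> space M - B" by (rule P.AE_prob_1)
    thus ?thesis unfolding B_def by eventually_elim auto
  qed
  have ioall: "AE \<omega> in M. \<forall>n. n \<ge> 1 \<longrightarrow> (\<exists>k\<ge>n. X (Suc k) \<omega> = ampA k)"
    using io by (simp add: AE_all_countable)
  have part4: "AE \<omega> in M. limsup (\<lambda>n. ereal (z n \<omega>)) = \<infinity>"
    using twoall ioall
  proof eventually_elim
    case (elim \<omega>)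
    have znn: "0 \<le> z n \<omega>" for n
    proof (induction n)
      case 0 thus ?case using assms(5) by simp
    next
      case (Suc n)
      have "0 \<le> X (Suc n) \<omega>" using elim(1) ampA_pos[of n] by (metis less_le order_refl)
      thus ?case using Suc step_nonneg[of n] assms(6)[of n \<omega>] by simp
    qed
    have big: "\<exists>m\<ge>n. ereal c < ereal (z m \<omega>)" for n c
    proof -
      obtain N0 where N0: "max c 0 ^ 4 < real N0" using reals_Archimedean2 by blast
      define N where "N = max N0 (max n 1)"
      have "c < ampA N"
      proof (cases "c \<le> 0")
        case True thus ?thesis using ampA_pos[of N] by linarith
      next
        case False
        hence "c ^ 4 < real N + 1" using N0 unfolding N_def by auto
        thus ?thesis unfolding ampA_def using False by (intro root4_bound) auto
      qed
      have "N \<ge> 1" unfolding N_def by simp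
      then obtain k where k: "k \<ge> N" "X (Suc k) \<omega> = ampA k" using elim(2) by blast
      have "ampA N \<le> ampA k" using k(1) by (rule ampA_mono)
      moreover have "X (Suc k) \<omega> \<le> z (Suc k) \<omega>"
        using assms(6)[of k \<omega>] znn[of k] step_nonneg[of k] by simp
      ultimately have "c < z (Suc k) \<omega>" using \<open>c < ampA N\<close> k(2) by linarith
      moreover have "Suc k \<ge> n" using k(1) unfolding N_def by simp
      ultimately show ?thesis by auto
    qed
    have "(SUP m\<in>{n..}. ereal (z m \<omega>)) = \<infinity>" for n
    proof -
      have "\<exists>m\<in>{n..}. x < ereal (z m \<omega>)" if "x < \<infinity>" for x
      proof (cases x)
        case (real c) thus ?thesis using big[of n c] by auto
      next
        case MInf thus ?thesis by auto
      qed (use that in auto)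
      hence "\<forall>x<top. \<exists>m\<in>{n..}. x < ereal (z m \<omega>)" by (simp add: top_ereal_def)
      hence "(SUP m\<in>{n..}. ereal (z m \<omega>)) = top" by (subst SUP_eq_top_iff)
      thus ?thesis by (simp add: top_ereal_def)
    qed
    thus ?case by (simp add: limsup_INF_SUP)
  qed
  have zeq: "z (Suc k) = (\<lambda>\<omega>. (1 - stepT k) * z k \<omega> + X (Suc k) \<omega>)" for k
    by (rule ext) (rule assms(6))
  have z0: "z 0 = (\<lambda>_. 0)" by (rule ext) (simp add: assms(5))
  have Xint: "integrable M (X (Suc k))" for k
  proof (rule P.integrable_const_bound[where B = "ampA k"])
    show "AE x in M. norm (X (Suc k) x) \<le> ampA k"
      using two[of k] by eventually_elim (use ampA_pos[of k] in auto)
  qed simp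
  have zint: "integrable M (z k)" for k
  proof (induction k)
    case 0 thus ?case unfolding z0 by simp
  next
    case (Suc k) thus ?case unfolding zeq using Xint[of k] by (auto intro!: Bochner_Integration.integrable_add integrable_mult_right)
  qed
  have part3: "AE \<omega> in M. real_cond_exp M (nat_filtration M X n) (z (Suc n)) \<omega>
                          = (1 - stepT n) * z n \<omega> + stepT n" for n
  proof -
    define F where "F = nat_filtration M X n"
    define G where "G = {X i -` B \<inter> space M | i B. i \<in> {1..n} \<and> B \<in> sets borel}"
    have F_eq: "F = sigma (space M) G" unfolding F_def G_def nat_filtration_def by simp
    have G_sub: "G \<subseteq> Pow (space M)" by (auto simp: G_def)
    have G_M: "G \<subseteq> sets M" using Xm by (auto simp: G_def)
    have spaceF: "space F = space M" unfolding F_eq using G_sub by (simp add: space_measure_of)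
    have setsF: "sets F = sigma_sets (space M) G" unfolding F_eq using G_sub by (simp add: sets_measure_of)
    have subalg: "subalgebra M F" unfolding subalgebra_def spaceF setsF
      using sets.sigma_sets_subset[OF G_M] by simp
    interpret S: sigma_finite_subalgebra M F
      using subalg P.finite_measure_axioms by (intro finite_measure_subalgebra_is_sigma_finite)
        (simp add: finite_measure_subalgebra_def finite_measure_subalgebra_axioms_def)
    have XF: "X i \<in> borel_measurable F" if "1 \<le> i" "i \<le> n" for i
    proof (rule measurableI)
      fix A :: "real set" assume "A \<in> sets borel"
      hence "X i -` A \<inter> space M \<in> G" unfolding G_def using that by auto
      thus "X i -` A \<inter> space F \<in> sets F" unfolding setsF spaceF by auto
    qed auto
    have zF: "k \<le> n \<Longrightarrow> z k \<in> borel_measurable F" for k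
    proof (induction k)
      case 0 thus ?case unfolding z0 by simp
    next
      case (Suc k)
      hence "z k \<in> borel_measurable F" "X (Suc k) \<in> borel_measurable F" using XF[of "Suc k"] by auto
      thus ?case unfolding zeq by (intro borel_measurable_add borel_measurable_times borel_measurable_const)
    qed
    have indepF: "P.prob (A \<inter> E n) = P.prob A * P.prob (E n)" if A: "A \<in> sets F" for A
    proof -
      define S' where "S' i = sigma_sets (space M) {X i -` B \<inter> space M | B. B \<in> sets borel}" for i
      define I where "I b = (if b then {1..n} else {Suc n})" for b :: bool
      have ind1: "P.indep_sets S' {1..}" using indep unfolding P.indep_vars_def S'_def by simp
      have "(\<Union>b. I b) \<subseteq> {1..}" unfolding I_def by auto
      hence ind2: "P.indep_sets S' (\<Union>b. I b)" using ind1 by (rule P.indep_sets_mono_index)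
      have ind3: "P.indep_sets (\<lambda>b. sigma_sets (space M) (\<Union>i\<in>I b. S' i)) UNIV"
      proof (rule P.indep_sets_collect_sigma)
        show "P.indep_sets S' (\<Union>b\<in>UNIV. I b)" using ind2 by simp
        show "Int_stable (S' i)" for i unfolding S'_def by (rule Int_stable_sigma_sets) auto
        show "disjoint_family_on I UNIV" unfolding disjoint_family_on_def I_def by auto
      qed
      define A' where "A' b = (if b then A else E n)" for b
      have "A \<in> sigma_sets (space M) (\<Union>i\<in>I True. S' i)"
      proof -
        have "G \<subseteq> (\<Union>i\<in>I True. S' i)" unfolding G_def I_def S'_def
          by (auto intro!: bexI sigma_sets.Basic) blast
        hence "sigma_sets (space M) G \<subseteq> sigma_sets (space M) (\<Union>i\<in>I True. S' i)"
          by (rule sigma_sets_subseteq)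
        thus ?thesis using A setsF by auto
      qed
      moreover have "E n \<in> sigma_sets (space M) (\<Union>i\<in>I False. S' i)"
      proof -
        have "E n = X (Suc n) -` {ampA n} \<inter> space M" unfolding E_def by auto
        hence "E n \<in> S' (Suc n)" unfolding S'_def by (auto intro!: sigma_sets.Basic)
        thus ?thesis unfolding I_def by auto
      qed
      ultimately have "\<forall>j\<in>UNIV. A' j \<in> sigma_sets (space M) (\<Union>i\<in>I j. S' i)"
        unfolding A'_def by auto
      from P.indep_setsD[OF ind3 subset_UNIV _ _ this]
      have "P.prob (\<Inter>j. A' j) = (\<Prod>j\<in>UNIV. P.prob (A' j))" by simp
      moreover have "(\<Inter>j. A' j) = A \<inter> E n" unfolding A'_def by (auto simp: UNIV_bool)
      ultimately show ?thesis unfolding A'_def by (simp add: UNIV_bool)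
    qed
    have XintA: "(LINT x:A|M. X (Suc n) x) = (LINT x:A|M. stepT n)" if A: "A \<in> sets F" for A
    proof -
      have AM: "A \<in> sets M" using A subalg unfolding subalgebra_def by auto
      have "(LINT x:A|M. X (Suc n) x) = (LINT x|M. ampA n * indicator (A \<inter> E n) x)"
        unfolding set_lebesgue_integral_def
      proof (rule integral_cong_AE)
        show "AE x in M. indicator A x *\<^sub>R X (Suc n) x = ampA n * indicator (A \<inter> E n) x"
          using two[of n] AE_space by eventually_elim (auto simp: indicator_def E_def)
      qed (use AM in auto)
      also have "\<dots> = ampA n * P.prob (A \<inter> E n)" using AM by simp
      also have "\<dots> = stepT n * P.prob A" using indepF[OF A] probE[of n] stepT_eq[of n] by simp
      also have "\<dots> = (LINT x:A|M. stepT n)" using AM by (simp add: set_integral_const P.emeasure_finite)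
      finally show ?thesis .
    qed
    have ceX: "AE x in M. real_cond_exp M F (X (Suc n)) x = stepT n"
      by (rule S.real_cond_exp_charact) (use XintA Xint in auto)
    have cez: "AE x in M. real_cond_exp M F (z n) x = z n x"
      by (rule S.real_cond_exp_F_meas) (use zint zF in auto)
    have ceadd: "AE x in M. real_cond_exp M F (z (Suc n)) x = real_cond_exp M F (\<lambda>x. (1 - stepT n) * z n x) x + real_cond_exp M F (X (Suc n)) x"
      unfolding zeq by (rule S.real_cond_exp_add) (use zint Xint in auto)
    have cemul: "AE x in M. real_cond_exp M F (\<lambda>x. (1 - stepT n) * z n x) x = (1 - stepT n) * real_cond_exp M F (z n) x"
      by (rule S.real_cond_exp_cmult) (use zint in auto)
    show ?thesis using ceX cez ceadd cemul unfolding F_def[symmetric] by eventually_elim simp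
  qed
  show ?thesis using not_summable_stepT summable_stepT2 part3 part4 by blast
qed
end
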